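(* Let $\mathcal{G}$ be the real Lie algebra with basis $X_1,X_2,X_3$ and brackets $[X_1,X_2]=X_3$, $[X_2,X_3]=X_1$, $[X_3,X_1]=X_2$ (Bianchi type $IX$). Every real Manin triple $(\mathcal{D},\mathcal{G}',\tilde{\mathcal{G}}')$ with $\mathcal{G}'\cong\mathcal{G}$ is isomorphic to exactly one Manin triple $(\mathcal{D},\mathcal{G},\tilde{\mathcal{G}})$ in which $\tilde{\mathcal{G}}$, written in the basis $\tilde X^1,\tilde X^2,\tilde X^3$ dual to $X_1,X_2,X_3$, has one of the following bracket structures: (a) (Bianchi $I$) $[\tilde X^1,\tilde X^2]=[\tilde X^2,\tilde X^3]=[\tilde X^3,\tilde X^1]=0$; (b) (Bianchi $V$) $[\tilde X^1,\tilde X^2]=-b\tilde X^2$, $[\tilde X^2,\tilde X^3]=0$, $[\tilde X^3,\tilde X^1]=b\tilde X^3$, for some $b>0$ (different $b$ giving non-isomorphic triples).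
   Context: A real Manin triple $(\mathcal{D},\mathcal{G},\tilde{\mathcal{G}})$ consists of a real Lie algebra $\mathcal{D}$ with a symmetric, ad-invariant, nondegenerate bilinear form $\langle\cdot,\cdot\rangle$, and two maximally isotropic Lie subalgebras $\mathcal{G},\tilde{\mathcal{G}}$ with $\mathcal{D}=\mathcal{G}\oplus\tilde{\mathcal{G}}$ as vector spaces; here $\dim\mathcal{D}=6$, $\dim\mathcal{G}=\dim\tilde{\mathcal{G}}=3$. Bases $X_i$ of $\mathcal{G}$ and $\tilde X^i$ of $\tilde{\mathcal{G}}$ are dual if $\langle X_i,X_j\rangle=0$, $\langle X_i,\tilde X^j\rangle=\delta_i^j$, $\langle\tilde X^i,\tilde X^j\rangle=0$. If $[X_i,X_j]=f_{ij}{}^kX_k$ and $[\tilde X^i,\tilde X^j]=\tilde f^{ij}{}_k\tilde X^k$, ad-invariance forces $[X_i,\tilde X^j]=f_{ki}{}^j\tilde X^k+\tilde f^{jk}{}_iX_k$, so the triple is determined by the brackets of $\mathcal{G}$ and $\tilde{\mathcal{G}}$ in dual bases (subject to the Jacobi identity of $\mathcal{D}$). Two Manin triples are isomorphic if there is a Lie algebra isomorphism of the doubles preserving the bilinear forms and mapping first subalgebra to first subalgebra and second to second; equivalently, they are related by a change of basis $X_i'=X_kA^k{}_i$, $\tilde X'^j=(A^{-1})^j{}_k\tilde X^k$. *)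

theory Defs
  imports "HOL-Analysis.Analysis"
begin

text \<open>Structure constants are indexed by the three-element type 3 (numerals 1, 2, 3 of
 this type are the three indices X_1, X_2, X_3). A triple of structure constants
 sc i j k stands for c_ij^k (bracket of basis elements i and j has k-th component
 c_ij^k).  For the dual algebra, ft i j k stands for ft^{ij}_k.\<close>

type_synonym sconst = "3 \<Rightarrow> 3 \<Rightarrow> 3 \<Rightarrow> real"

definition bianchiIX :: sconst where
  "bianchiIX i j k =
     (if (i, j, k) \<in> {(1,2,3), (2,3,1), (3,1,2)} then 1
      else if (i, j, k) \<in> {(2,1,3), (3,2,1), (1,3,2)} then -1 else 0)"

definition bianchiI :: sconst where
  "bianchiI i j k = 0"

definition bianchiV :: "real \<Rightarrow> sconst" where
  "bianchiV b i j k =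
     (if (i, j, k) = (1,2,2) then -b
      else if (i, j, k) = (2,1,2) then b
      else if (i, j, k) = (3,1,3) then b
      else if (i, j, k) = (1,3,3) then -b else 0)"

definition gbr :: "sconst \<Rightarrow> real^3 \<Rightarrow> real^3 \<Rightarrow> real^3" where
  "gbr f x y = (\<chi> k. \<Sum>i\<in>UNIV. \<Sum>j\<in>UNIV. x$i * y$j * f i j k)"

definition lie_isomorphic :: "sconst \<Rightarrow> sconst \<Rightarrow> bool" where
  "lie_isomorphic f g \<longleftrightarrow>
     (\<exists>\<phi> :: real^3 \<Rightarrow> real^3. linear \<phi> \<and> bij \<phi> \<and>
        (\<forall>x y. \<phi> (gbr f x y) = gbr g (\<phi> x) (\<phi> y)))"

text \<open>The double D = G + G~, an element (x, xi) standing for x_i X_i + xi_j X~^j.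
 Brackets: [X_i,X_j] = f_ij^k X_k, [X~^i,X~^j] = ft^ij_k X~^k,
 [X_i,X~^j] = f_ki^j X~^k + ft^jk_i X_k, extended bilinearly and antisymmetrically.\<close>
definition dbr :: "sconst \<Rightarrow> sconst \<Rightarrow> ((real^3) \<times> (real^3)) \<Rightarrow> ((real^3) \<times> (real^3)) \<Rightarrow> ((real^3) \<times> (real^3))" where
  "dbr f ft u v =
     (let x = fst u; \<xi> = snd u; y = fst v; \<eta> = snd v in
       ((\<chi> k. \<Sum>i\<in>UNIV. \<Sum>j\<in>UNIV.
            x$i * y$j * f i j k + x$i * \<eta>$j * ft j k i - \<xi>$j * y$i * ft j k i),
        (\<chi> k. \<Sum>i\<in>UNIV. \<Sum>j\<in>UNIV.
            \<xi>$i * \<eta>$j * ft i j k + x$i * \<eta>$j * f k i j - \<xi>$j * y$i * f k i j)))"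

definition dform :: "((real^3) \<times> (real^3)) \<Rightarrow> ((real^3) \<times> (real^3)) \<Rightarrow> real" where
  "dform u v = fst u \<bullet> snd v + snd u \<bullet> fst v"

text \<open>Symmetry, nondegeneracy,
 isotropy of G and G~ and the direct sum decomposition hold by construction.\<close>
definition manin_triple :: "sconst \<Rightarrow> sconst \<Rightarrow> bool" where
  "manin_triple f ft \<longleftrightarrow>
     (\<forall>u. dbr f ft u u = 0) \<and>
     (\<forall>u v w. dbr f ft u (dbr f ft v w) + dbr f ft v (dbr f ft w u)
              + dbr f ft w (dbr f ft u v) = 0) \<and>
     (\<forall>u v w. dform (dbr f ft u v) w = dform u (dbr f ft v w))"

definition Gsub :: "((real^3) \<times> (real^3)) set" where
  "Gsub = range (\<lambda>x. (x, 0))"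

definition Gtsub :: "((real^3) \<times> (real^3)) set" where
  "Gtsub = range (\<lambda>\<xi>. (0, \<xi>))"

definition manin_iso :: "sconst \<Rightarrow> sconst \<Rightarrow> sconst \<Rightarrow> sconst \<Rightarrow> bool" where
  "manin_iso f1 ft1 f2 ft2 \<longleftrightarrow>
     (\<exists>\<Phi> :: ((real^3) \<times> (real^3)) \<Rightarrow> ((real^3) \<times> (real^3)).
        linear \<Phi> \<and> bij \<Phi> \<and>
        (\<forall>u v. \<Phi> (dbr f1 ft1 u v) = dbr f2 ft2 (\<Phi> u) (\<Phi> v)) \<and>
        (\<forall>u v. dform (\<Phi> u) (\<Phi> v) = dform u v) \<and>
        \<Phi> ` Gsub = Gsub \<and> \<Phi> ` Gtsub = Gtsub)"

end

theory Submission
  imports Defs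
begin

definition ftv :: "real^3 \<Rightarrow> sconst" where
  "ftv v i j k = v$i * (if j = k then 1 else 0) - v$j * (if i = k then 1 else 0)"

lemma gbr_IX: "gbr bianchiIX x y = cross3 x y"
  by (simp add: gbr_def bianchiIX_def cross3_def vec_eq_iff sum_3 forall_3 vector_def)

lemma gbr_ftv: "gbr (ftv v) x y = (v \<bullet> x) *\<^sub>R y - (v \<bullet> y) *\<^sub>R x"
  by (simp add: gbr_def ftv_def vec_eq_iff sum_3 forall_3 inner_vec_def algebra_simps)

lemma gbr_add_left: "gbr f (x + x') y = gbr f x y + gbr f x' y"
  by (simp add: gbr_def vec_eq_iff sum_3 algebra_simps)
lemma gbr_add_right: "gbr f x (y + y') = gbr f x y + gbr f x y'"
  by (simp add: gbr_def vec_eq_iff sum_3 algebra_simps)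
lemma gbr_scale_left: "gbr f (c *\<^sub>R x) y = c *\<^sub>R gbr f x y"
  by (simp add: gbr_def vec_eq_iff sum_3 algebra_simps)
lemma gbr_scale_right: "gbr f x (c *\<^sub>R y) = c *\<^sub>R gbr f x y"
  by (simp add: gbr_def vec_eq_iff sum_3 algebra_simps)
lemma gbr_axis: "gbr f (axis i 1) (axis j 1) $ k = f i j k"
  using exhaust_3[of i] exhaust_3[of j] by (auto simp: gbr_def axis_def sum_3)

lemma vec3_decomp: "(x::real^3) = x$1 *\<^sub>R axis 1 1 + x$2 *\<^sub>R axis 2 1 + x$3 *\<^sub>R axis 3 1"
  by (simp add: vec_eq_iff forall_3 axis_def)

lemma dbr_D: "dform (dbr f ft (x,\<xi>) (y,\<eta>)) (z,\<zeta>) =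
   gbr f x y \<bullet> \<zeta> + x \<bullet> gbr ft \<eta> \<zeta> - y \<bullet> gbr ft \<xi> \<zeta> + gbr ft \<xi> \<eta> \<bullet> z
   + \<eta> \<bullet> gbr f z x - \<xi> \<bullet> gbr f z y"
  by (simp add: dform_def dbr_def gbr_def inner_vec_def sum_3 algebra_simps)

lemma dform_nondeg:
  assumes "\<And>w. dform p w = dform q w" shows "p = q"
proof -
  obtain a b where p: "p = (a,b)" by fastforce
  obtain c d where q: "q = (c,d)" by fastforce
  have 1: "a \<bullet> (a - c) = c \<bullet> (a - c)" using assms[of "(0, a - c)"] by (simp add: p q dform_def)
  have 2: "b \<bullet> (b - d) = d \<bullet> (b - d)" using assms[of "(b - d, 0)"] by (simp add: p q dform_def)
  have "(a - c) \<bullet> (a - c) = 0" using 1 by (simp add: inner_diff_left)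
  moreover have "(b - d) \<bullet> (b - d) = 0" using 2 by (simp add: inner_diff_left)
  ultimately show ?thesis by (simp add: p q)
qed

lemma transport:
  fixes \<phi> \<psi> :: "real^3 \<Rightarrow> real^3"
  assumes lphi: "linear \<phi>" and lpsi: "linear \<psi>" and bphi: "bij \<phi>" and bpsi: "bij \<psi>"
    and pair: "\<And>x \<xi>. \<phi> x \<bullet> \<psi> \<xi> = x \<bullet> \<xi>"
    and hphi: "\<And>x y. \<phi> (gbr f x y) = gbr g (\<phi> x) (\<phi> y)"
    and hpsi: "\<And>x y. \<psi> (gbr ft x y) = gbr gt (\<psi> x) (\<psi> y)"
  shows "manin_iso f ft g gt" "manin_triple f ft \<Longrightarrow> manin_triple g gt"
proof -
  have pair2: "\<And>x \<xi>. \<psi> \<xi> \<bullet> \<phi> x = \<xi> \<bullet> x" using pair by (simp add: inner_commute)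
  define \<Phi> where "\<Phi> = (\<lambda>u::(real^3)\<times>(real^3). (\<phi> (fst u), \<psi> (snd u)))"
  interpret lp: linear \<phi> by fact
  interpret ls: linear \<psi> by fact
  have linP: "linear \<Phi>"
    unfolding linear_iff \<Phi>_def by (simp add: lp.add ls.add lp.scale ls.scale)
  have injP: "inj \<Phi>"
  proof (rule injI)
    fix u v assume "\<Phi> u = \<Phi> v"
    then have "\<phi> (fst u) = \<phi> (fst v)" "\<psi> (snd u) = \<psi> (snd v)" by (simp_all add: \<Phi>_def)
    then have "fst u = fst v" "snd u = snd v" using bphi bpsi by (auto dest: bij_is_inj injD)
    then show "u = v" by (simp add: prod_eq_iff)
  qed
  have surjP: "surj \<Phi>"
  proof -
    have "\<exists>u. (a,b) = \<Phi> u" for a b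
    proof -
      obtain x where x: "\<phi> x = a" using bphi by (metis bij_pointE)
      obtain y where y: "\<psi> y = b" using bpsi by (metis bij_pointE)
      show ?thesis using x y by (auto simp add: \<Phi>_def)
    qed
    then show ?thesis by (metis surj_def prod.collapse)
  qed
  have bijP: "bij \<Phi>" using injP surjP by (simp add: bij_def)
  have formP: "\<And>u v. dform (\<Phi> u) (\<Phi> v) = dform u v"
    by (simp add: \<Phi>_def dform_def pair inner_commute)
  have G: "\<Phi> ` Gsub = Gsub"
  proof -
    have "\<Phi> ` Gsub = range (\<lambda>x. (\<phi> x, 0))" by (auto simp: Gsub_def \<Phi>_def image_image ls.zero)
    also have "\<dots> = (\<lambda>x. (x, 0)) ` range \<phi>" by (simp add: image_image)
    also have "\<dots> = Gsub" unfolding Gsub_def using bphi by (simp add: bij_is_surj)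
    finally show ?thesis .
  qed
  have Gt: "\<Phi> ` Gtsub = Gtsub"
  proof -
    have "\<Phi> ` Gtsub = range (\<lambda>x. (0, \<psi> x))" by (auto simp: Gtsub_def \<Phi>_def image_image lp.zero)
    also have "\<dots> = (\<lambda>x. (0, x)) ` range \<psi>" by (simp add: image_image)
    also have "\<dots> = Gtsub" unfolding Gtsub_def using bpsi by (simp add: bij_is_surj)
    finally show ?thesis .
  qed
  have homP: "\<And>u v. \<Phi> (dbr f ft u v) = dbr g gt (\<Phi> u) (\<Phi> v)"
  proof -
    fix u v
    show "\<Phi> (dbr f ft u v) = dbr g gt (\<Phi> u) (\<Phi> v)"
    proof (rule dform_nondeg)
      fix w
      obtain w' where w': "w = \<Phi> w'" using surjP by (metis surj_def)
      obtain x \<xi> where u: "u = (x,\<xi>)" by fastforce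
      obtain y \<eta> where v: "v = (y,\<eta>)" by fastforce
      obtain z \<zeta> where ww: "w' = (z,\<zeta>)" by fastforce
      have "dform (\<Phi> (dbr f ft u v)) w = dform (dbr f ft u v) w'" using formP w' by simp
      also have "\<dots> = dform (dbr g gt (\<Phi> u) (\<Phi> v)) w"
        using pair2 by (simp add: w' u v ww \<Phi>_def dbr_D hphi[symmetric] hpsi[symmetric] pair)
      finally show "dform (\<Phi> (dbr f ft u v)) w = dform (dbr g gt (\<Phi> u) (\<Phi> v)) w" .
    qed
  qed
  show "manin_iso f ft g gt"
    unfolding manin_iso_def using linP bijP homP formP G Gt by blast
  assume mt: "manin_triple f ft"
  interpret lP: linear \<Phi> by (fact linP)
  have mt1: "\<And>u. dbr f ft u u = 0" using mt unfolding manin_triple_def by blast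
  have mt2: "\<And>u v w. dbr f ft u (dbr f ft v w) + dbr f ft v (dbr f ft w u) + dbr f ft w (dbr f ft u v) = 0"
    using mt unfolding manin_triple_def by blast
  have mt3: "\<And>u v w. dform (dbr f ft u v) w = dform u (dbr f ft v w)"
    using mt unfolding manin_triple_def by blast
  have pre: "\<And>u. \<exists>u'. u = \<Phi> u'" using surjP by (metis surj_def)
  have A: "\<forall>u. dbr g gt u u = 0"
  proof
    fix u obtain u' where "u = \<Phi> u'" using pre by blast
    then show "dbr g gt u u = 0" using mt1[of u'] homP[of u' u'] lP.zero by simp
  qed
  have J: "\<forall>u v w. dbr g gt u (dbr g gt v w) + dbr g gt v (dbr g gt w u) + dbr g gt w (dbr g gt u v) = 0"
  proof (intro allI)
    fix u v w
    obtain u' where u: "u = \<Phi> u'" using pre by blast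
    obtain v' where v: "v = \<Phi> v'" using pre by blast
    obtain w' where w: "w = \<Phi> w'" using pre by blast
    have "dbr g gt u (dbr g gt v w) + dbr g gt v (dbr g gt w u) + dbr g gt w (dbr g gt u v)
       = \<Phi> (dbr f ft u' (dbr f ft v' w') + dbr f ft v' (dbr f ft w' u') + dbr f ft w' (dbr f ft u' v'))"
      by (simp add: u v w homP lP.add)
    also have "\<dots> = 0" using mt2 lP.zero by simp
    finally show "dbr g gt u (dbr g gt v w) + dbr g gt v (dbr g gt w u) + dbr g gt w (dbr g gt u v) = 0" .
  qed
  have I: "\<forall>u v w. dform (dbr g gt u v) w = dform u (dbr g gt v w)"
  proof (intro allI)
    fix u v w
    obtain u' where u: "u = \<Phi> u'" using pre by blast
    obtain v' where v: "v = \<Phi> v'" using pre by blast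
    obtain w' where w: "w = \<Phi> w'" using pre by blast
    show "dform (dbr g gt u v) w = dform u (dbr g gt v w)"
      using mt3 by (simp add: u v w homP[symmetric] formP)
  qed
  show "manin_triple g gt" unfolding manin_triple_def using A J I by blast
qed

lemma classify:
  assumes mt: "manin_triple bianchiIX g"
  shows "g = ftv (vector [g 1 2 2, g 2 1 1, g 3 1 1])"
proof -
  have mt1: "\<And>u. dbr bianchiIX g u u = 0" using mt unfolding manin_triple_def by blast
  have mt2: "\<And>u v w. dbr bianchiIX g u (dbr bianchiIX g v w) + dbr bianchiIX g v (dbr bianchiIX g w u)
      + dbr bianchiIX g w (dbr bianchiIX g u v) = 0"
    using mt unfolding manin_triple_def by blast
  have sq: "gbr g \<xi> \<xi> = 0" for \<xi>
  proof -
    have "dbr bianchiIX g (0,\<xi>) (0,\<xi>) = (0, gbr g \<xi> \<xi>)" by (simp add: dbr_def gbr_def vec_eq_iff)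
    then show ?thesis using mt1[of "(0,\<xi>)"] by (simp add: zero_prod_def)
  qed
  have d0: "g i i k = 0" for i k using sq[of "axis i 1"] gbr_axis[of g i i k] by simp
  have an: "g j i k = - g i j k" for i j k
  proof -
    have "gbr g (axis i 1 + axis j 1) (axis i 1 + axis j 1) $ k = 0" using sq by simp
    then show ?thesis by (simp add: gbr_add_left gbr_add_right gbr_axis d0)
  qed
  have a1: "g 2 1 k = - g 1 2 k" "g 3 1 k = - g 1 3 k" "g 3 2 k = - g 2 3 k" for k by (rule an)+
  have a2: "g 1 1 k = 0" "g 2 2 k = 0" "g 3 3 k = 0" for k by (rule d0)+
  have E: "\<And>a b c. dbr bianchiIX g (axis a 1, 0) (dbr bianchiIX g (axis b 1, 0) (0, axis c 1))
     + dbr bianchiIX g (axis b 1, 0) (dbr bianchiIX g (0, axis c 1) (axis a 1, 0))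
     + dbr bianchiIX g (0, axis c 1) (dbr bianchiIX g (axis a 1, 0) (axis b 1, 0)) = 0"
    using mt2 by blast
  have L: "g 1 2 3 = 0 \<and> g 1 3 2 = 0 \<and> g 2 3 1 = 0 \<and> g 1 3 3 = g 1 2 2 \<and> g 2 3 3 = - g 1 2 1 \<and> g 2 3 2 = g 1 3 1"
  proof -
    note [simp] = dbr_def sum_3 axis_def bianchiIX_def vec_eq_iff forall_3 a1 a2 zero_prod_def
    note E121 = E[of 1 2 1, simplified]
    note E122 = E[of 1 2 2, simplified]
    note E123 = E[of 1 2 3, simplified]
    note E131 = E[of 1 3 1, simplified]
    note E132 = E[of 1 3 2, simplified]
    note E133 = E[of 1 3 3, simplified]
    note E231 = E[of 2 3 1, simplified]
    note E232 = E[of 2 3 2, simplified]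
    note E233 = E[of 2 3 3, simplified]
    show ?thesis using E121 E122 E123 E131 E132 E133 E231 E232 E233
      by (elim conjE) linarith
  qed
  show ?thesis
  proof (intro ext)
    fix i j k :: 3
    show "g i j k = ftv (vector [g 1 2 2, g 2 1 1, g 3 1 1]) i j k"
      using exhaust_3[of i] exhaust_3[of j] exhaust_3[of k] L
      by (elim disjE; simp add: ftv_def a1 a2)
  qed
qed


lemma ftv_e1: "ftv (vector [- c, 0, 0]) = bianchiV c"
proof (intro ext)
  fix i j k :: 3
  show "ftv (vector [- c, 0, 0]) i j k = bianchiV c i j k"
    using exhaust_3[of i] exhaust_3[of j] exhaust_3[of k]
    by (elim disjE; simp add: ftv_def bianchiV_def)
qed

lemma bianchiV0: "bianchiV 0 = bianchiI"
  by (intro ext) (simp add: bianchiV_def bianchiI_def)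

lemma norm_e1: "norm (vector [c, 0, 0] :: real^3) = \<bar>c\<bar>"
  by (simp add: norm_eq_sqrt_inner inner_vec_def sum_3)

lemma ftv_rot:
  assumes R: "orthogonal_transformation R"
  shows "R (gbr (ftv v) x y) = gbr (ftv (R v)) (R x) (R y)"
proof -
  interpret linear R using R by (simp add: orthogonal_transformation)
  have "R v \<bullet> R x = v \<bullet> x" "R v \<bullet> R y = v \<bullet> y" using R by (simp_all add: orthogonal_transformation_def)
  then show ?thesis by (simp add: gbr_ftv diff scale)
qed

lemma psi_transfer:
  fixes \<psi> :: "real^3 \<Rightarrow> real^3" and ft :: sconst
  assumes l: "linear \<psi>" and b: "bij \<psi>"
  defines "ft1 \<equiv> (\<lambda>i j k. \<psi> (gbr ft (inv \<psi> (axis i 1)) (inv \<psi> (axis j 1))) $ k)"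
  shows "\<psi> (gbr ft \<xi> \<eta>) = gbr ft1 (\<psi> \<xi>) (\<psi> \<eta>)"
proof -
  interpret lp: linear \<psi> by fact
  have li: "linear (inv \<psi>)" using l b by (simp add: bij_is_inj inj_linear_imp_inv_linear)
  interpret li: linear "inv \<psi>" by fact
  define a where "a = \<psi> \<xi>"
  define b' where "b' = \<psi> \<eta>"
  define E where "E i = inv \<psi> (axis i 1)" for i
  have xi: "\<xi> = a$1 *\<^sub>R E 1 + a$2 *\<^sub>R E 2 + a$3 *\<^sub>R E 3"
  proof -
    have "\<xi> = inv \<psi> a" using b by (simp add: a_def bij_is_inj)
    also have "\<dots> = inv \<psi> (a$1 *\<^sub>R axis 1 1 + a$2 *\<^sub>R axis 2 1 + a$3 *\<^sub>R axis 3 1)"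
      using vec3_decomp[of a] by simp
    finally show ?thesis by (simp add: li.add li.scale E_def)
  qed
  have eta: "\<eta> = b'$1 *\<^sub>R E 1 + b'$2 *\<^sub>R E 2 + b'$3 *\<^sub>R E 3"
  proof -
    have "\<eta> = inv \<psi> b'" using b by (simp add: b'_def bij_is_inj)
    also have "\<dots> = inv \<psi> (b'$1 *\<^sub>R axis 1 1 + b'$2 *\<^sub>R axis 2 1 + b'$3 *\<^sub>R axis 3 1)"
      using vec3_decomp[of b'] by simp
    finally show ?thesis by (simp add: li.add li.scale E_def)
  qed
  have R: "gbr ft1 a b' = (\<Sum>i\<in>UNIV. \<Sum>j\<in>UNIV. (a$i * b'$j) *\<^sub>R \<psi> (gbr ft (E i) (E j)))"
    unfolding gbr_def ft1_def E_def by (simp add: vec_eq_iff sum_component)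
  have "\<psi> (gbr ft \<xi> \<eta>) = gbr ft1 a b'"
    unfolding R xi eta
    by (simp add: gbr_add_left gbr_add_right gbr_scale_left gbr_scale_right lp.add lp.scale
        sum_3 algebra_simps)
  then show ?thesis by (simp add: a_def b'_def)
qed

lemma exist_part:
  fixes f ft :: sconst
  assumes mt: "manin_triple f ft" and li: "lie_isomorphic f bianchiIX"
  shows "\<exists>c\<ge>0. manin_triple bianchiIX (bianchiV c) \<and> manin_iso f ft bianchiIX (bianchiV c)"
proof -
  obtain \<phi> :: "real^3 \<Rightarrow> real^3" where lphi: "linear \<phi>" and bphi: "bij \<phi>"
    and hphi: "\<And>x y. \<phi> (gbr f x y) = gbr bianchiIX (\<phi> x) (\<phi> y)"
    using li unfolding lie_isomorphic_def by blast
  have liphi: "linear (inv \<phi>)" using lphi bphi by (simp add: bij_is_inj inj_linear_imp_inv_linear)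
  define \<psi> where "\<psi> = adjoint (inv \<phi>)"
  have lpsi: "linear \<psi>" unfolding \<psi>_def using liphi by (rule adjoint_linear)
  have pair: "\<phi> x \<bullet> \<psi> \<xi> = x \<bullet> \<xi>" for x \<xi>
    unfolding \<psi>_def using adjoint_works[OF liphi, of "\<phi> x" \<xi>] bphi by (simp add: bij_is_inj)
  have ipsi: "inj \<psi>"
  proof (rule injI)
    fix \<xi> \<xi>' assume "\<psi> \<xi> = \<psi> \<xi>'"
    then have "\<forall>x. x \<bullet> \<xi> = x \<bullet> \<xi>'" by (metis pair)
    then show "\<xi> = \<xi>'" by (simp add: vector_eq_ldot)
  qed
  have bpsi: "bij \<psi>" using ipsi lpsi by (simp add: bij_def linear_injective_imp_surjective)
  define ft1 where "ft1 = (\<lambda>i j k. \<psi> (gbr ft (inv \<psi> (axis i 1)) (inv \<psi> (axis j 1))) $ k)"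
  have hpsi: "\<psi> (gbr ft \<xi> \<eta>) = gbr ft1 (\<psi> \<xi>) (\<psi> \<eta>)" for \<xi> \<eta>
    unfolding ft1_def by (rule psi_transfer[OF lpsi bpsi])
  have mt1: "manin_triple bianchiIX ft1"
    using transport(2)[OF lphi lpsi bphi bpsi pair hphi hpsi mt] .
  define v where "v = (vector [ft1 1 2 2, ft1 2 1 1, ft1 3 1 1] :: real^3)"
  have ft1v: "ft1 = ftv v" unfolding v_def by (rule classify[OF mt1])
  have "norm v = norm (vector [- norm v, 0, 0] :: real^3)" by (simp add: norm_e1)
  then obtain R where oR: "orthogonal_transformation R" and dR: "det (matrix R) = 1"
    and Rv: "R v = vector [- norm v, 0, 0]"
    using rotation_exists[of v "vector [- norm v, 0, 0] :: real^3"] by auto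
  have lR: "linear R" using oR by (simp add: orthogonal_transformation)
  have bR: "bij R" using oR by (rule orthogonal_transformation_bij)
  have nR: "\<And>x. norm (R x) = norm x" using oR by (simp add: orthogonal_transformation_norm)
  have iR: "R x \<bullet> R y = x \<bullet> y" for x y using oR by (simp add: orthogonal_transformation_def)
  have crossR: "R (cross3 x y) = cross3 (R x) (R y)" for x y
    using cross_linear_image[OF lR nR dR] by simp
  have l1: "linear (R \<circ> \<phi>)" using lR lphi by (simp add: linear_compose)
  have l2: "linear (R \<circ> \<psi>)" using lR lpsi by (simp add: linear_compose)
  have b1: "bij (R \<circ> \<phi>)" using bR bphi by (simp add: bij_comp)
  have b2: "bij (R \<circ> \<psi>)" using bR bpsi by (simp add: bij_comp)
  have p2: "(R \<circ> \<phi>) x \<bullet> (R \<circ> \<psi>) \<xi> = x \<bullet> \<xi>" for x \<xi> by (simp add: iR pair)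
  have h1: "(R \<circ> \<phi>) (gbr f x y) = gbr bianchiIX ((R \<circ> \<phi>) x) ((R \<circ> \<phi>) y)" for x y
    by (simp add: hphi gbr_IX crossR)
  have h2: "(R \<circ> \<psi>) (gbr ft x y) = gbr (bianchiV (norm v)) ((R \<circ> \<psi>) x) ((R \<circ> \<psi>) y)" for x y
    by (simp add: hpsi ft1v ftv_rot[OF oR] Rv ftv_e1)
  have "manin_triple bianchiIX (bianchiV (norm v))" "manin_iso f ft bianchiIX (bianchiV (norm v))"
    using transport[OF l1 l2 b1 b2 p2 h1 h2] mt by auto
  then show ?thesis by (intro exI[of _ "norm v"]) simp
qed


lemma nonpar: "\<exists>\<eta>::real^3. \<forall>c. \<eta> \<noteq> c *\<^sub>R \<xi>"
proof (cases "\<xi>$1 = 0")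
  case True
  show ?thesis
  proof (intro exI allI notI)
    fix c assume "(axis 1 1 :: real^3) = c *\<^sub>R \<xi>"
    then have "(axis 1 1 :: real^3) $ 1 = (c *\<^sub>R \<xi>) $ 1" by simp
    then show False using True by (simp add: axis_def)
  qed
next
  case False
  show ?thesis
  proof (intro exI allI notI)
    fix c assume a: "(axis 2 1 :: real^3) = c *\<^sub>R \<xi>"
    then have "(axis 2 1 :: real^3) $ 1 = (c *\<^sub>R \<xi>) $ 1" by simp
    then have "c = 0" using False by (simp add: axis_def)
    then have "(axis 2 1 :: real^3) $ 2 = 0" using a by simp
    then show False by (simp add: axis_def)
  qed
qed

lemma cross_cross3: "cross3 x (cross3 x y) = (x \<bullet> y) *\<^sub>R x - (x \<bullet> x) *\<^sub>R y"
  unfolding vec_eq_iff forall_3 by (simp add: cross3_def inner_vec_def sum_3 vector_def algebra_simps)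

lemma manin_iso_comb:
  assumes "manin_iso f ft g gt" "manin_iso f ft g' gt'"
  shows "manin_iso g gt g' gt'"
proof -
  obtain P where lP: "linear P" and bP: "bij P" and hP: "\<And>u v. P (dbr f ft u v) = dbr g gt (P u) (P v)"
    and fP: "\<And>u v. dform (P u) (P v) = dform u v" and GP: "P ` Gsub = Gsub" and GtP: "P ` Gtsub = Gtsub"
    using assms(1) unfolding manin_iso_def by blast
  obtain Q where lQ: "linear Q" and bQ: "bij Q" and hQ: "\<And>u v. Q (dbr f ft u v) = dbr g' gt' (Q u) (Q v)"
    and fQ: "\<And>u v. dform (Q u) (Q v) = dform u v" and GQ: "Q ` Gsub = Gsub" and GtQ: "Q ` Gtsub = Gtsub"
    using assms(2) unfolding manin_iso_def by blast
  have iP: "inj P" using bP by (rule bij_is_inj)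
  have sP: "\<And>u. P (inv P u) = u" using bP by (simp add: bij_is_surj surj_f_inv_f)
  have lIP: "linear (inv P)" using lP iP by (rule inj_linear_imp_inv_linear)
  define T where "T = Q \<circ> inv P"
  have "linear T" unfolding T_def using lQ lIP by (rule linear_compose[rotated])
  moreover have "bij T" unfolding T_def using bQ bP by (simp add: bij_comp bij_imp_bij_inv)
  moreover have "\<forall>u v. T (dbr g gt u v) = dbr g' gt' (T u) (T v)"
  proof (intro allI)
    fix u v
    have "dbr g gt u v = P (dbr f ft (inv P u) (inv P v))" by (simp add: hP sP)
    then show "T (dbr g gt u v) = dbr g' gt' (T u) (T v)" by (simp add: T_def iP hQ)
  qed
  moreover have "\<forall>u v. dform (T u) (T v) = dform u v"
  proof (intro allI)
    fix u v
    have "dform u v = dform (P (inv P u)) (P (inv P v))" by (simp add: sP)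
    then show "dform (T u) (T v) = dform u v" by (simp add: T_def fQ fP)
  qed
  moreover have "T ` Gsub = Gsub"
  proof -
    have "inv P ` Gsub = Gsub" using GP iP by (metis image_inv_f_f)
    moreover have "T ` Gsub = Q ` (inv P ` Gsub)" unfolding T_def by (simp add: image_comp)
    ultimately show ?thesis by (simp add: GQ)
  qed
  moreover have "T ` Gtsub = Gtsub"
  proof -
    have "inv P ` Gtsub = Gtsub" using GtP iP by (metis image_inv_f_f)
    moreover have "T ` Gtsub = Q ` (inv P ` Gtsub)" unfolding T_def by (simp add: image_comp)
    ultimately show ?thesis by (simp add: GtQ)
  qed
  ultimately show ?thesis unfolding manin_iso_def by blast
qed

lemma uniq_core:
  assumes "manin_iso bianchiIX (ftv a) bianchiIX (ftv a')"
  shows "norm a = norm a'"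
proof -
  obtain P where lP: "linear P" and bP: "bij P"
    and hP: "\<And>u v. P (dbr bianchiIX (ftv a) u v) = dbr bianchiIX (ftv a') (P u) (P v)"
    and fP: "\<And>u v. dform (P u) (P v) = dform u v" and GP: "P ` Gsub = Gsub" and GtP: "P ` Gtsub = Gtsub"
    using assms unfolding manin_iso_def by blast
  interpret lP: linear P by fact
  have iP: "inj P" using bP by (rule bij_is_inj)
  define \<phi> where "\<phi> x = fst (P (x, 0))" for x
  define \<psi> where "\<psi> x = snd (P (0, x))" for x
  have Px: "P (x, 0) = (\<phi> x, 0)" for x
  proof -
    have "P (x, 0) \<in> Gsub" using GP unfolding Gsub_def by blast
    then show ?thesis unfolding \<phi>_def Gsub_def by auto
  qed
  have Pxi: "P (0, \<xi>) = (0, \<psi> \<xi>)" for \<xi>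
  proof -
    have "P (0, \<xi>) \<in> Gtsub" using GtP unfolding Gtsub_def by blast
    then show ?thesis unfolding \<psi>_def Gtsub_def by auto
  qed
  have lphi: "linear \<phi>"
    unfolding linear_iff
  proof (intro conjI allI)
    fix x y :: "real^3" and c :: real
    have "P (x + y, 0) = P (x, 0) + P (y, 0)" by (simp add: lP.add[symmetric])
    then show "\<phi> (x + y) = \<phi> x + \<phi> y" by (simp add: Px)
    have "P (c *\<^sub>R x, 0) = c *\<^sub>R P (x, 0)" by (simp add: lP.scale[symmetric])
    then show "\<phi> (c *\<^sub>R x) = c *\<^sub>R \<phi> x" by (simp add: Px)
  qed
  have lpsi: "linear \<psi>"
    unfolding linear_iff
  proof (intro conjI allI)
    fix x y :: "real^3" and c :: real
    have "P (0, x + y) = P (0, x) + P (0, y)" by (simp add: lP.add[symmetric])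
    then show "\<psi> (x + y) = \<psi> x + \<psi> y" by (simp add: Pxi)
    have "P (0, c *\<^sub>R x) = c *\<^sub>R P (0, x)" by (simp add: lP.scale[symmetric])
    then show "\<psi> (c *\<^sub>R x) = c *\<^sub>R \<psi> x" by (simp add: Pxi)
  qed
  interpret lphi: linear \<phi> by fact
  interpret lpsi: linear \<psi> by fact
  have iphi: "\<phi> x = \<phi> y \<Longrightarrow> x = y" for x y
    using iP Px[of x] Px[of y] by (metis injD prod.inject)
  have ipsi: "\<psi> x = \<psi> y \<Longrightarrow> x = y" for x y
    using iP Pxi[of x] Pxi[of y] by (metis injD prod.inject)
  have spsi: "\<exists>\<xi>. \<psi> \<xi> = \<eta>" for \<eta>
  proof -
    have "(0, \<eta>) \<in> P ` Gtsub" using GtP unfolding Gtsub_def by blast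
    then obtain \<xi> where "P (0, \<xi>) = (0, \<eta>)" unfolding Gtsub_def by auto
    then show ?thesis using Pxi by auto
  qed
  have pair: "\<phi> x \<bullet> \<psi> \<xi> = x \<bullet> \<xi>" for x \<xi>
    using fP[of "(x,0)" "(0,\<xi>)"] by (simp add: Px Pxi dform_def)
  have dG: "dbr f ft (x, 0) (y, 0) = (gbr f x y, 0)" for f ft x y
    by (simp add: dbr_def gbr_def vec_eq_iff)
  have dGt: "dbr f ft (0, x) (0, y) = (0, gbr ft x y)" for f ft x y
    by (simp add: dbr_def gbr_def vec_eq_iff)
  have hphi: "\<phi> (cross3 x y) = cross3 (\<phi> x) (\<phi> y)" for x y
    using hP[of "(x,0)" "(y,0)"] by (simp add: Px dG gbr_IX)
  have hpsi: "\<psi> (gbr (ftv a) x y) = gbr (ftv a') (\<psi> x) (\<psi> y)" for x y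
    using hP[of "(0,x)" "(0,y)"] by (simp add: Pxi dGt)
  define \<alpha> where "\<alpha> \<xi> = a \<bullet> \<xi> - a' \<bullet> \<psi> \<xi>" for \<xi>
  have rel: "\<alpha> \<xi> *\<^sub>R \<psi> \<eta> = \<alpha> \<eta> *\<^sub>R \<psi> \<xi>" for \<xi> \<eta>
    using hpsi[of \<xi> \<eta>] by (simp add: gbr_ftv lpsi.diff lpsi.scale \<alpha>_def algebra_simps)
  have a0: "\<alpha> \<xi> = 0" for \<xi>
  proof (rule ccontr)
    assume ne: "\<alpha> \<xi> \<noteq> 0"
    obtain \<eta> where np: "\<forall>c. \<eta> \<noteq> c *\<^sub>R \<xi>" using nonpar by blast
    have "\<psi> \<eta> = (\<alpha> \<eta> / \<alpha> \<xi>) *\<^sub>R \<psi> \<xi>" using rel[of \<xi> \<eta>] ne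
      by (metis (no_types, lifting) divide_inverse_commute inverse_eq_divide mult.commute
          real_vector.scale_left_imp_eq scaleR_scaleR eq_divide_imp nonzero_divide_eq_eq)
    then have "\<psi> \<eta> = \<psi> ((\<alpha> \<eta> / \<alpha> \<xi>) *\<^sub>R \<xi>)" by (simp add: lpsi.scale)
    then have "\<eta> = (\<alpha> \<eta> / \<alpha> \<xi>) *\<^sub>R \<xi>" by (rule ipsi)
    then show False using np by blast
  qed
  have a'eq: "a' = \<phi> a"
  proof -
    have "(a' - \<phi> a) \<bullet> \<psi> \<xi> = 0" for \<xi>
      using a0[of \<xi>] pair[of a \<xi>] by (simp add: \<alpha>_def inner_diff_left)
    then have "(a' - \<phi> a) \<bullet> \<eta> = 0" for \<eta> using spsi by metis
    then have "(a' - \<phi> a) \<bullet> (a' - \<phi> a) = 0" by blast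
    then show ?thesis by simp
  qed
  have key: "(a \<bullet> a - \<phi> a \<bullet> \<phi> a) *\<^sub>R \<phi> y = (a \<bullet> y - \<phi> a \<bullet> \<phi> y) *\<^sub>R \<phi> a" for y
  proof -
    have "\<phi> (cross3 a (cross3 a y)) = cross3 (\<phi> a) (cross3 (\<phi> a) (\<phi> y))" by (simp add: hphi)
    then have "(a \<bullet> y) *\<^sub>R \<phi> a - (a \<bullet> a) *\<^sub>R \<phi> y = (\<phi> a \<bullet> \<phi> y) *\<^sub>R \<phi> a - (\<phi> a \<bullet> \<phi> a) *\<^sub>R \<phi> y"
      by (simp add: cross_cross3 lphi.diff lphi.scale)
    then show ?thesis by (simp add: algebra_simps)
  qed
  have "a \<bullet> a = \<phi> a \<bullet> \<phi> a"
  proof (rule ccontr)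
    assume ne: "a \<bullet> a \<noteq> \<phi> a \<bullet> \<phi> a"
    then have ne': "a \<bullet> a - \<phi> a \<bullet> \<phi> a \<noteq> 0" by simp
    obtain y where np: "\<forall>c. y \<noteq> c *\<^sub>R a" using nonpar by blast
    define c where "c = (a \<bullet> y - \<phi> a \<bullet> \<phi> y) / (a \<bullet> a - \<phi> a \<bullet> \<phi> a)"
    have "\<phi> y = c *\<^sub>R \<phi> a" using key[of y] ne' unfolding c_def
      by (metis (no_types, lifting) divide_inverse_commute inverse_eq_divide mult.commute
          real_vector.scale_left_imp_eq scaleR_scaleR eq_divide_imp nonzero_divide_eq_eq)
    then have "\<phi> y = \<phi> (c *\<^sub>R a)" by (simp add: lphi.scale)
    then have "y = c *\<^sub>R a" by (rule iphi)
    then show False using np by blast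
  qed
  then show ?thesis using a'eq by (simp add: norm_eq_sqrt_inner)
qed


lemma form_c: "ft0 = bianchiI \<or> (\<exists>b>0. ft0 = bianchiV b) \<Longrightarrow> \<exists>c\<ge>0. ft0 = bianchiV c"
  using bianchiV0 by (metis less_eq_real_def order_refl)

lemma uniq_c:
  assumes "manin_iso f ft bianchiIX (bianchiV c)" "manin_iso f ft bianchiIX (bianchiV c')"
    and "c \<ge> 0" "c' \<ge> 0"
  shows "c = c'"
proof -
  have "manin_iso bianchiIX (bianchiV c) bianchiIX (bianchiV c')" by (rule manin_iso_comb[OF assms(1,2)])
  then have "manin_iso bianchiIX (ftv (vector [- c, 0, 0])) bianchiIX (ftv (vector [- c', 0, 0]))"
    by (simp add: ftv_e1)
  then have "norm (vector [- c, 0, 0] :: real^3) = norm (vector [- c', 0, 0] :: real^3)" by (rule uniq_core)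
  then show ?thesis using assms(3,4) by (simp add: norm_e1)
qed

theorem mainTheorem1:
  fixes f ft :: sconst
  assumes "manin_triple f ft"
    and "lie_isomorphic f bianchiIX"
  shows "\<exists>!ft0. (ft0 = bianchiI \<or> (\<exists>b>0. ft0 = bianchiV b)) \<and>
            manin_triple bianchiIX ft0 \<and> manin_iso f ft bianchiIX ft0"
proof -
  obtain c where c0: "c \<ge> 0" and m1: "manin_triple bianchiIX (bianchiV c)"
    and m2: "manin_iso f ft bianchiIX (bianchiV c)"
    using exist_part[OF assms] by blast
  have cls: "bianchiV c = bianchiI \<or> (\<exists>b>0. bianchiV c = bianchiV b)"
  proof (cases "c = 0")
    case True then show ?thesis using bianchiV0 by simp
  next
    case False then have "c > 0" using c0 by simp
    then show ?thesis by blast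
  qed
  show ?thesis
  proof (rule ex1I[of _ "bianchiV c"])
    show "(bianchiV c = bianchiI \<or> (\<exists>b>0. bianchiV c = bianchiV b)) \<and>
        manin_triple bianchiIX (bianchiV c) \<and> manin_iso f ft bianchiIX (bianchiV c)"
      using cls m1 m2 by blast
  next
    fix ft0
    assume h: "(ft0 = bianchiI \<or> (\<exists>b>0. ft0 = bianchiV b)) \<and>
        manin_triple bianchiIX ft0 \<and> manin_iso f ft bianchiIX ft0"
    then obtain c' where c'0: "c' \<ge> 0" and e: "ft0 = bianchiV c'" using form_c by blast
    have m3: "manin_iso f ft bianchiIX (bianchiV c')" using h e by simp
    have "c' = c" by (rule uniq_c[OF m3 m2 c'0 c0])
    then show "ft0 = bianchiV c" using e by simp
  qed
qed

end
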